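(* Let $E$ be a Banach lattice with an order continuous norm, let $\mathfrak{B}$ be a Boolean subalgebra of $\mathfrak{B}(E)$, and let $T\colon E\to E$ be a $\mathfrak{B}$-Volterra operator with $T\le I_E$. Then the operator $\pi-\pi T+\pi^*T$ is $\mathfrak{B}$-Volterra for every $\pi\in\mathfrak{B}$. Further, if $\pi\in\mathfrak{B}$ satisfies $\pi T=\pi$, then the operator $I_E+\pi-T$ is $\mathfrak{B}$-Volterra.
   Context: $\mathfrak{B}(E)$ is the Boolean algebra of all order projections on $E$ ($\pi\le\rho$ iff $\pi\rho=\pi$, $\pi\wedge\rho=\pi\rho$, $\pi^*=I_E-\pi$, zero $\mathbf 0$, unit $\mathbf 1=I_E$). A positive operator $T\colon E\to E$ is $\mathfrak{B}$-Volterra if for all $\pi\in\mathfrak{B}$ and $x,y\in E$, $\pi x=\pi y$ implies $\pi Tx=\pi Ty$. $T\le I_E$ refers to the usual order on operators ($I_E-T$ positive). *)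

theory Defs
  imports "HOL-Analysis.Analysis"
begin

class banach_lattice = banach + ordered_real_vector + lattice +
  assumes lattice_norm: "sup x (- x) \<le> sup y (- y) \<Longrightarrow> norm x \<le> norm y"

definition order_continuous_norm :: "('a::banach_lattice) itself \<Rightarrow> bool" where
  "order_continuous_norm _ \<longleftrightarrow>
     (\<forall>D::'a set. D \<noteq> {}
        \<and> (\<forall>x\<in>D. \<forall>y\<in>D. \<exists>z\<in>D. z \<le> x \<and> z \<le> y)
        \<and> (\<forall>x\<in>D. 0 \<le> x)
        \<and> (\<forall>l. (\<forall>x\<in>D. l \<le> x) \<longrightarrow> l \<le> 0)
        \<longrightarrow> (\<forall>e>0. \<exists>x\<in>D. norm x < e))"

definition positive_op :: "('a::banach_lattice \<Rightarrow> 'a) \<Rightarrow> bool" where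
  "positive_op T \<longleftrightarrow> linear T \<and> (\<forall>x. 0 \<le> x \<longrightarrow> 0 \<le> T x)"

definition order_projection :: "('a::banach_lattice \<Rightarrow> 'a) \<Rightarrow> bool" where
  "order_projection P \<longleftrightarrow> linear P \<and> P \<circ> P = P \<and>
     (\<forall>x. 0 \<le> x \<longrightarrow> 0 \<le> P x \<and> P x \<le> x)"

text \<open>Boolean subalgebra of the Boolean algebra of all order projections:
  contains 0 and I, closed under meet (composition) and complement (I - P).\<close>

definition boolean_subalgebra :: "('a::banach_lattice \<Rightarrow> 'a) set \<Rightarrow> bool" where
  "boolean_subalgebra B \<longleftrightarrow>
     B \<subseteq> {P. order_projection P} \<and> (\<lambda>x. 0) \<in> B \<and> id \<in> B \<and>
     (\<forall>P\<in>B. \<forall>Q\<in>B. P \<circ> Q \<in> B) \<and>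
     (\<forall>P\<in>B. (\<lambda>x. x - P x) \<in> B)"

definition volterra :: "('a::banach_lattice \<Rightarrow> 'a) set \<Rightarrow> ('a \<Rightarrow> 'a) \<Rightarrow> bool" where
  "volterra B T \<longleftrightarrow> positive_op T \<and>
     (\<forall>\<pi>\<in>B. \<forall>x y. \<pi> x = \<pi> y \<longrightarrow> \<pi> (T x) = \<pi> (T y))"

end

theory Submission
  imports Defs
begin

lemma op_facts:
  assumes "order_projection P"
  shows "linear P" "P (P x) = P x" "0 \<le> x \<Longrightarrow> 0 \<le> P x" "0 \<le> x \<Longrightarrow> P x \<le> x"
  using assms unfolding order_projection_def by (auto simp: fun_eq_iff)

lemma commute:
  assumes B: "boolean_subalgebra B" and P: "P \<in> B" and Q: "Q \<in> B"
  shows "P (Q x) = Q (P x)"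
proof -
  have opP: "order_projection P" and opQ: "order_projection Q"
    using B P Q unfolding boolean_subalgebra_def by auto
  have opPQ: "order_projection (P \<circ> Q)" and opQP: "order_projection (Q \<circ> P)"
    using B P Q unfolding boolean_subalgebra_def by auto
  have opA1: "order_projection ((\<lambda>x. x - P x) \<circ> Q)"
    using B P Q unfolding boolean_subalgebra_def by blast
  have opA2: "order_projection (Q \<circ> (\<lambda>x. x - P x))"
    using B P Q unfolding boolean_subalgebra_def by blast
  have lP: "linear P" and lQ: "linear Q" using opP opQ op_facts by auto
  have iP: "\<And>y. P (P y) = P y" and iQ: "\<And>y. Q (Q y) = Q y" using opP opQ op_facts by auto
  have iPQ: "\<And>y. P (Q (P (Q y))) = P (Q y)" using op_facts(2)[OF opPQ] by simp
  have iQP: "\<And>y. Q (P (Q (P y))) = Q (P y)" using op_facts(2)[OF opQP] by simp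
  have i1: "Q (Q x - P (Q x)) - P (Q (Q x - P (Q x))) = Q x - P (Q x)"
    using op_facts(2)[OF opA1, of x] by simp
  have "Q (Q x - P (Q x)) - P (Q (Q x - P (Q x))) = Q x - Q (P (Q x))"
    by (simp add: linear_diff[OF lQ] linear_diff[OF lP] iQ iPQ)
  with i1 have e1: "Q (P (Q x)) = P (Q x)" by simp
  have i2: "Q ((Q (x - P x)) - P (Q (x - P x))) = Q (x - P x)"
    using op_facts(2)[OF opA2, of x] by simp
  have "Q ((Q (x - P x)) - P (Q (x - P x))) = Q x - Q (P (Q x))"
    by (simp add: linear_diff[OF lQ] linear_diff[OF lP] iQ iQP)
  with i2 have e2: "Q (P (Q x)) = Q (P x)" by (simp add: linear_diff[OF lQ])
  show ?thesis using e1 e2 by simp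
qed

theorem theorem3p11:
  fixes B :: "('a::banach_lattice \<Rightarrow> 'a) set" and T :: "'a \<Rightarrow> 'a"
  assumes "order_continuous_norm TYPE('a)"
    and "boolean_subalgebra B"
    and "volterra B T"
    and "\<forall>x. 0 \<le> x \<longrightarrow> T x \<le> x"
  shows "(\<forall>\<pi>\<in>B. volterra B (\<lambda>x. \<pi> x - \<pi> (T x) + (T x - \<pi> (T x))))
       \<and> (\<forall>\<pi>\<in>B. (\<forall>x. \<pi> (T x) = \<pi> x) \<longrightarrow> volterra B (\<lambda>x. x + \<pi> x - T x))"
proof -
  have B: "boolean_subalgebra B" by fact
  have lT: "linear T" and pT: "\<And>x. 0 \<le> x \<Longrightarrow> 0 \<le> T x"
    using assms(3) unfolding volterra_def positive_op_def by auto
  have vT: "\<And>\<rho> z. \<rho> \<in> B \<Longrightarrow> \<rho> z = 0 \<Longrightarrow> \<rho> (T z) = 0"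
  proof -
    fix \<rho> z assume r: "\<rho> \<in> B" "\<rho> z = 0"
    then have op: "order_projection \<rho>" using B unfolding boolean_subalgebra_def by auto
    have "\<rho> z = \<rho> 0" using r linear_0[OF op_facts(1)[OF op]] by simp
    then have "\<rho> (T z) = \<rho> (T 0)" using assms(3) r(1) unfolding volterra_def by blast
    then show "\<rho> (T z) = 0" using linear_0[OF lT] linear_0[OF op_facts(1)[OF op]] by simp
  qed
  have opB: "\<And>\<pi>. \<pi> \<in> B \<Longrightarrow> order_projection \<pi>" using B unfolding boolean_subalgebra_def by auto
  show ?thesis
  proof (intro conjI ballI impI)
    fix \<pi> assume p: "\<pi> \<in> B"
    have op: "order_projection \<pi>" using opB p .
    note lp = op_facts(1)[OF op]
    show "volterra B (\<lambda>x. \<pi> x - \<pi> (T x) + (T x - \<pi> (T x)))"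
      unfolding volterra_def positive_op_def
    proof (intro conjI allI impI ballI)
      show "linear (\<lambda>x. \<pi> x - \<pi> (T x) + (T x - \<pi> (T x)))"
        using lp lT by (intro linear_compose_add linear_compose_sub linear_compose[unfolded o_def, OF lT lp]) auto
    next
      fix x :: 'a assume x: "0 \<le> x"
      have "0 \<le> x - T x" using assms(4) x by simp
      then have "0 \<le> \<pi> (x - T x)" using op_facts(3)[OF op] by blast
      then have a: "0 \<le> \<pi> x - \<pi> (T x)" by (simp add: linear_diff[OF lp])
      have b: "0 \<le> T x - \<pi> (T x)" using op_facts(4)[OF op] pT x by simp
      show "0 \<le> \<pi> x - \<pi> (T x) + (T x - \<pi> (T x))" using a b by simp
    next
      fix \<rho> x y assume r: "\<rho> \<in> B" and e: "\<rho> x = \<rho> y"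
      note lr = op_facts(1)[OF opB[OF r]]
      have z: "\<rho> (x - y) = 0" using e by (simp add: linear_diff[OF lr])
      have t: "\<rho> (T (x - y)) = 0" using vT[OF r z] .
      have c1: "\<rho> (\<pi> (x - y)) = 0" using commute[OF B r p] z linear_0[OF lp] by simp
      have c2: "\<rho> (\<pi> (T (x - y))) = 0" using commute[OF B r p] t linear_0[OF lp] by simp
      have "\<rho> (\<pi> x - \<pi> (T x) + (T x - \<pi> (T x))) - \<rho> (\<pi> y - \<pi> (T y) + (T y - \<pi> (T y)))
          = \<rho> (\<pi> (x - y)) - \<rho> (\<pi> (T (x - y))) + (\<rho> (T (x - y)) - \<rho> (\<pi> (T (x - y))))"
        by (simp add: linear_diff[OF lr] linear_diff[OF lp] linear_diff[OF lT] linear_add[OF lr] algebra_simps)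
      then show "\<rho> (\<pi> x - \<pi> (T x) + (T x - \<pi> (T x))) = \<rho> (\<pi> y - \<pi> (T y) + (T y - \<pi> (T y)))"
        using c1 c2 t by simp
    qed
  next
    fix \<pi> assume p: "\<pi> \<in> B" and pT1: "\<forall>x. \<pi> (T x) = \<pi> x"
    have op: "order_projection \<pi>" using opB p .
    note lp = op_facts(1)[OF op]
    show "volterra B (\<lambda>x. x + \<pi> x - T x)"
      unfolding volterra_def positive_op_def
    proof (intro conjI allI impI ballI)
      show "linear (\<lambda>x. x + \<pi> x - T x)"
        using lp lT by (intro linear_compose_add linear_compose_sub linear_ident) auto
    next
      fix x :: 'a assume x: "0 \<le> x"
      have "0 \<le> x - T x" using assms(4) x by simp
      moreover have "0 \<le> \<pi> x" using op_facts(3)[OF op] x by blast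
      ultimately have "0 \<le> (x - T x) + \<pi> x" by (rule add_nonneg_nonneg)
      then show "0 \<le> x + \<pi> x - T x" by (simp add: algebra_simps)
    next
      fix \<rho> x y assume r: "\<rho> \<in> B" and e: "\<rho> x = \<rho> y"
      note lr = op_facts(1)[OF opB[OF r]]
      have z: "\<rho> (x - y) = 0" using e by (simp add: linear_diff[OF lr])
      have t: "\<rho> (T (x - y)) = 0" using vT[OF r z] .
      have c1: "\<rho> (\<pi> (x - y)) = 0" using commute[OF B r p] z linear_0[OF lp] by simp
      have "\<rho> (x + \<pi> x - T x) - \<rho> (y + \<pi> y - T y)
          = \<rho> (x - y) + \<rho> (\<pi> (x - y)) - \<rho> (T (x - y))"
        by (simp add: linear_diff[OF lr] linear_diff[OF lp] linear_diff[OF lT] linear_add[OF lr] algebra_simps)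
      then show "\<rho> (x + \<pi> x - T x) = \<rho> (y + \<pi> y - T y)"
        using c1 z t by simp
    qed
  qed
qed

end
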